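(* Let $D\geq 2$, let $\{|i\rangle\}_{i=0}^{D-1}$ be an orthonormal basis of $\mathbb{C}^D$, and define $P=\sum_{i,j}|i\rangle\langle j|\otimes|j\rangle\langle i|$, $P_{sym}=\frac12(I_{D^2}+P)$, $P_{as}=\frac12(I_{D^2}-P)$, and for $0\leq p\leq 1$ the Werner state $\rho_W=p\frac{2}{D^2+D}P_{sym}+(1-p)\frac{2}{D^2-D}P_{as}$ on $\mathbb{C}^D\otimes\mathbb{C}^D$. Then $$d_{\max}(\rho_W)=\frac{|2pD-D-1|}{D^2-1},$$ and this maximum is attained by every traceless unitary $U^B$ on $\mathbb{C}^D$.
   Context: For a state $\rho$ on $\mathbb{C}^M\otimes\mathbb{C}^N$ let $\rho_B=\mathrm{Tr}_A(\rho)$. A unitary $U^B$ on $\mathbb{C}^N$ is called cyclic for $\rho$ if $[\rho_B,U^B]=0$. Set $\rho_f=(I\otimes U^B)\rho(I\otimes U^{B\dagger})$ and define the Fu distance $d(\rho,U^B)=\frac{1}{\sqrt2}\|\rho-\rho_f\|_F$ (Frobenius norm $\|X\|_F=\sqrt{\mathrm{Tr}(X^\dagger X)}$). Define $d_{\max}(\rho)=\max\{d(\rho,U^B): U^B \text{ unitary},\ [\rho_B,U^B]=0\}$. *)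

theory Defs
  imports "HOL-Analysis.Analysis"
begin

text \<open>Matrices on C^n are complex^'n^'n (index type 'n, n = CARD('n)).
  Operators on C^M (x) C^N are indexed by the product type 'a \<times> 'b.\<close>

definition adj :: "complex^('n::finite)^('m::finite) \<Rightarrow> complex^'m^'n" where
  "adj A = (\<chi> i j. cnj (A $ j $ i))"

definition unitary_mat :: "complex^('n::finite)^'n \<Rightarrow> bool" where
  "unitary_mat U \<longleftrightarrow> adj U ** U = mat 1 \<and> U ** adj U = mat 1"

definition kron :: "complex^('a::finite)^'a \<Rightarrow> complex^('b::finite)^'b \<Rightarrow> complex^('a \<times> 'b)^('a \<times> 'b)" where
  "kron A B = (\<chi> i j. A $ fst i $ fst j * B $ snd i $ snd j)"

definition ptrace_A :: "complex^(('a::finite) \<times> ('b::finite))^('a \<times> 'b) \<Rightarrow> complex^'b^'b" where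
  "ptrace_A \<rho> = (\<chi> i j. \<Sum>k\<in>UNIV. \<rho> $ (k, i) $ (k, j))"

definition frob_norm :: "complex^('n::finite)^('m::finite) \<Rightarrow> real" where
  "frob_norm X = sqrt (\<Sum>i\<in>UNIV. \<Sum>j\<in>UNIV. (cmod (X $ i $ j))^2)"

definition cyclic :: "complex^(('a::finite) \<times> ('b::finite))^('a \<times> 'b) \<Rightarrow> complex^'b^'b \<Rightarrow> bool" where
  "cyclic \<rho> U \<longleftrightarrow> unitary_mat U \<and> ptrace_A \<rho> ** U = U ** ptrace_A \<rho>"

definition rho_f :: "complex^(('a::finite) \<times> ('b::finite))^('a \<times> 'b) \<Rightarrow> complex^'b^'b \<Rightarrow> complex^('a \<times> 'b)^('a \<times> 'b)" where
  "rho_f \<rho> U = kron (mat 1 :: complex^'a^'a) U ** \<rho> ** adj (kron (mat 1 :: complex^'a^'a) U)"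

definition fu_dist :: "complex^(('a::finite) \<times> ('b::finite))^('a \<times> 'b) \<Rightarrow> complex^'b^'b \<Rightarrow> real" where
  "fu_dist \<rho> U = (1 / sqrt 2) * frob_norm (\<rho> - rho_f \<rho> U)"

definition d_max :: "complex^(('a::finite) \<times> ('b::finite))^('a \<times> 'b) \<Rightarrow> real" where
  "d_max \<rho> = Sup {fu_dist \<rho> U | U. cyclic \<rho> U}"

definition orthonormal_basis :: "(('n::finite) \<Rightarrow> complex^'n) \<Rightarrow> bool" where
  "orthonormal_basis e \<longleftrightarrow>
     (\<forall>i j. (\<Sum>k\<in>UNIV. cnj (e i $ k) * e j $ k) = (if i = j then 1 else 0))"

definition ketbra :: "(('n::finite) \<Rightarrow> complex^'n) \<Rightarrow> 'n \<Rightarrow> 'n \<Rightarrow> complex^'n^'n" where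
  "ketbra e i j = (\<chi> a b. e i $ a * cnj (e j $ b))"

definition swapP :: "(('n::finite) \<Rightarrow> complex^'n) \<Rightarrow> complex^('n \<times> 'n)^('n \<times> 'n)" where
  "swapP e = (\<Sum>i\<in>UNIV. \<Sum>j\<in>UNIV. kron (ketbra e i j) (ketbra e j i))"

definition P_sym :: "(('n::finite) \<Rightarrow> complex^'n) \<Rightarrow> complex^('n \<times> 'n)^('n \<times> 'n)" where
  "P_sym e = (1/2) *\<^sub>R (mat 1 + swapP e)"

definition P_as :: "(('n::finite) \<Rightarrow> complex^'n) \<Rightarrow> complex^('n \<times> 'n)^('n \<times> 'n)" where
  "P_as e = (1/2) *\<^sub>R (mat 1 - swapP e)"

definition werner :: "(('n::finite) \<Rightarrow> complex^'n) \<Rightarrow> real \<Rightarrow> complex^('n \<times> 'n)^('n \<times> 'n)" where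
  "werner e p = (let D = real CARD('n) in
     (p * 2 / (D^2 + D)) *\<^sub>R P_sym e + ((1 - p) * 2 / (D^2 - D)) *\<^sub>R P_as e)"

end

theory Submission
  imports Defs
begin


lemma mm_entry: "((A::complex^'k^'m) ** B) $ i $ j = (\<Sum>k\<in>UNIV. A $ i $ k * B $ k $ j)"
  by (simp add: matrix_matrix_mult_def)

lemma sum_pair: "(\<Sum>x\<in>(UNIV::('a::finite \<times> 'b::finite) set). f x) = (\<Sum>a\<in>UNIV. \<Sum>b\<in>UNIV. f (a,b))"
  by (simp add: sum.cartesian_product)

lemma onb_complete:
  assumes "orthonormal_basis (e :: 'n::finite \<Rightarrow> complex^'n)"
  shows "(\<Sum>i\<in>UNIV. e i $ a * cnj (e i $ b)) = (if a = b then 1 else 0)"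
proof -
  define M :: "complex^'n^'n" where "M = (\<chi> k i. e i $ k)"
  have "adj M ** M = mat 1"
    using assms by (simp add: vec_eq_iff mm_entry adj_def M_def orthonormal_basis_def mat_def)
  hence "M ** adj M = mat 1" using matrix_left_right_inverse by blast
  hence "(M ** adj M) $ a $ b = mat 1 $ a $ b" by simp
  thus ?thesis by (simp add: mm_entry adj_def M_def mat_def)
qed

lemma swap_entry:
  assumes "orthonormal_basis (e :: 'n::finite \<Rightarrow> complex^'n)"
  shows "swapP e $ x $ y = (if fst x = snd y \<and> snd x = fst y then 1 else 0)"
proof -
  have "swapP e $ x $ y = (\<Sum>i\<in>UNIV. \<Sum>j\<in>UNIV. e i $ fst x * cnj (e j $ fst y) * (e j $ snd x * cnj (e i $ snd y)))"
    by (simp add: swapP_def sum_component kron_def ketbra_def)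
  also have "\<dots> = (\<Sum>i\<in>UNIV. e i $ fst x * cnj (e i $ snd y)) * (\<Sum>j\<in>UNIV. e j $ snd x * cnj (e j $ fst y))"
    by (simp add: sum_product mult_ac)
  also have "\<dots> = (if fst x = snd y \<and> snd x = fst y then 1 else 0)"
    using onb_complete[OF assms] by simp
  finally show ?thesis .
qed



definition Sw :: "('n::finite \<times> 'n) \<Rightarrow> ('n \<times> 'n) \<Rightarrow> complex" where
  "Sw x y = (if fst x = snd y \<and> snd x = fst y then 1 else 0)"

lemma werner_entry:
  fixes p :: real
  assumes "orthonormal_basis (e :: 'n::finite \<Rightarrow> complex^'n)"
  defines "D \<equiv> real CARD('n)"
  defines "c1 \<equiv> p * 2 / (D^2 + D)" and "c2 \<equiv> (1 - p) * 2 / (D^2 - D)"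
  shows "werner e p $ x $ y = of_real ((c1 + c2)/2) * (if x = y then 1 else 0) + of_real ((c1 - c2)/2) * Sw x y"
proof -
  have "werner e p $ x $ y = c1 *\<^sub>R ((1/2) *\<^sub>R ((if x = y then 1 else 0) + Sw x y))
       + c2 *\<^sub>R ((1/2) *\<^sub>R ((if x = y then 1 else 0) - Sw x y))"
    using swap_entry[OF assms(1)]
    unfolding werner_def Let_def P_sym_def P_as_def c1_def c2_def D_def Sw_def
    by (simp add: mat_def)
  also have "\<dots> = of_real ((c1 + c2)/2) * (if x = y then 1 else 0) + of_real ((c1 - c2)/2) * Sw x y"
    by (simp add: scaleR_conv_of_real field_simps)
  finally show ?thesis .
qed

lemma ptrace_W:
  fixes W :: "complex^('n::finite \<times> 'n)^('n \<times> 'n)"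
  assumes "\<And>x y. W $ x $ y = a * (if x = y then 1 else 0) + b * Sw x y"
  shows "ptrace_A W = mat (of_nat CARD('n) * a + b)"
proof -
  have "(\<Sum>k\<in>UNIV. W $ (k, i) $ (k, j)) = (if i = j then of_nat CARD('n) * a + b else 0)" for i j
  proof -
    have "(\<Sum>k\<in>UNIV. W $ (k, i) $ (k, j)) = (\<Sum>k\<in>UNIV. (if i = j then a else 0) + (if k = j then (if i = k then b else 0) else 0))"
      by (intro sum.cong refl) (auto simp: assms Sw_def)
    also have "\<dots> = (if i = j then of_nat CARD('n) * a + b else 0)"
      by (simp add: sum.distrib)
    finally show ?thesis .
  qed
  thus ?thesis by (simp add: vec_eq_iff ptrace_A_def mat_def)
qed

lemma mat_mult_l: "mat c ** (U::complex^'n::finite^'n) = (\<chi> i j. c * U$i$j)"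
  by (simp add: vec_eq_iff mm_entry mat_def if_distrib[of "\<lambda>t. t * U$_$_"] cong: if_cong)
lemma mat_mult_r: "(U::complex^'n::finite^'n) ** mat c = (\<chi> i j. c * U$i$j)"
  by (simp add: vec_eq_iff mm_entry mat_def mult.commute if_distrib[of "\<lambda>t. U$_$_ * t"] cong: if_cong)

lemma cyclic_W:
  fixes W :: "complex^('n::finite \<times> 'n)^('n \<times> 'n)"
  assumes "\<And>x y. W $ x $ y = a * (if x = y then 1 else 0) + b * Sw x y"
  and "unitary_mat U"
  shows "cyclic W U"
  unfolding cyclic_def ptrace_W[OF assms(1)] using assms(2)
  by (simp add: mat_mult_l mat_mult_r)



lemma unit_rows:
  assumes "unitary_mat (U::complex^'n::finite^'n)"
  shows "(\<Sum>k\<in>UNIV. U$i$k * cnj (U$j$k)) = (if i = j then 1 else 0)"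
proof -
  have "(U ** adj U) $ i $ j = mat 1 $ i $ j" using assms by (simp add: unitary_mat_def)
  thus ?thesis by (simp add: mm_entry adj_def mat_def)
qed

lemma unit_cols:
  assumes "unitary_mat (U::complex^'n::finite^'n)"
  shows "(\<Sum>k\<in>UNIV. cnj (U$k$i) * U$k$j) = (if i = j then 1 else 0)"
proof -
  have "(adj U ** U) $ i $ j = mat 1 $ i $ j" using assms by (simp add: unitary_mat_def)
  thus ?thesis by (simp add: mm_entry adj_def mat_def)
qed

lemma rhof_entry:
  fixes W :: "complex^('n::finite \<times> 'n)^('n \<times> 'n)"
  assumes W: "\<And>x y. W $ x $ y = a * (if x = y then 1 else 0) + b * Sw x y"
  and U: "unitary_mat U"
  shows "rho_f W U $ x $ y = a * (if x = y then 1 else 0) + b * (U $ snd x $ fst y * cnj (U $ snd y $ fst x))"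
proof -
  define K :: "complex^('n \<times> 'n)^('n \<times> 'n)" where "K = kron (mat 1 :: complex^'n^'n) U"
  have K: "K $ x $ c = (if fst x = fst c then U $ snd x $ snd c else 0)" for x c
    by (simp add: K_def kron_def mat_def)
  have KW: "(K ** W) $ x $ d = a * (if fst x = fst d then U $ snd x $ snd d else 0)
            + b * (if fst x = snd d then U $ snd x $ fst d else 0)" for x d
  proof -
    have "(K ** W) $ x $ d = (\<Sum>c1\<in>UNIV. \<Sum>c2\<in>UNIV. K $ x $ (c1,c2) * W $ (c1,c2) $ d)"
      by (simp add: mm_entry sum_pair)
    also have "\<dots> = (\<Sum>c1\<in>UNIV. if c1 = fst x then (\<Sum>c2\<in>UNIV. U $ snd x $ c2 * W $ (c1,c2) $ d) else 0)"
      by (intro sum.cong refl) (auto simp: K)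
    also have "\<dots> = (\<Sum>c2\<in>UNIV. U $ snd x $ c2 * W $ (fst x,c2) $ d)"
      by simp
    also have "\<dots> = (\<Sum>c2\<in>UNIV. (if c2 = snd d then a * (if fst x = fst d then U $ snd x $ snd d else 0) else 0)
                     + (if c2 = fst d then b * (if fst x = snd d then U $ snd x $ fst d else 0) else 0))"
      by (intro sum.cong refl) (auto simp: W Sw_def algebra_simps prod_eq_iff)
    also have "\<dots> = a * (if fst x = fst d then U $ snd x $ snd d else 0)
            + b * (if fst x = snd d then U $ snd x $ fst d else 0)"
      by (simp add: sum.distrib)
    finally show ?thesis .
  qed
  have "rho_f W U $ x $ y = (\<Sum>d1\<in>UNIV. \<Sum>d2\<in>UNIV. (K ** W) $ x $ (d1,d2) * cnj (K $ y $ (d1,d2)))"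
    by (simp add: rho_f_def K_def[symmetric] mm_entry sum_pair adj_def)
  also have "\<dots> = (\<Sum>d1\<in>UNIV. if d1 = fst y then (\<Sum>d2\<in>UNIV. (K ** W) $ x $ (d1,d2) * cnj (U $ snd y $ d2)) else 0)"
    by (intro sum.cong refl) (auto simp: K)
  also have "\<dots> = (\<Sum>d2\<in>UNIV. (K ** W) $ x $ (fst y,d2) * cnj (U $ snd y $ d2))"
    by simp
  also have "\<dots> = (\<Sum>d2\<in>UNIV. (if fst x = fst y then a * (U $ snd x $ d2 * cnj (U $ snd y $ d2)) else 0)
                 + (if d2 = fst x then b * (U $ snd x $ fst y * cnj (U $ snd y $ fst x)) else 0))"
    by (intro sum.cong refl) (auto simp: KW algebra_simps)
  also have "\<dots> = (if fst x = fst y then a * (\<Sum>d2\<in>UNIV. U $ snd x $ d2 * cnj (U $ snd y $ d2)) else 0)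
                 + b * (U $ snd x $ fst y * cnj (U $ snd y $ fst x))"
    by (simp add: sum.distrib sum_distrib_left)
  also have "\<dots> = a * (if x = y then 1 else 0) + b * (U $ snd x $ fst y * cnj (U $ snd y $ fst x))"
    by (simp add: unit_rows[OF U] prod_eq_iff)
  finally show ?thesis .
qed



lemma sum_Sw:
  "(\<Sum>x\<in>UNIV. \<Sum>y\<in>UNIV. Sw x y * f x y) = (\<Sum>i\<in>UNIV. \<Sum>j\<in>UNIV. f (i,j) ((j,i)::'n::finite\<times>'n))"
proof -
  have "(\<Sum>x\<in>UNIV. \<Sum>y\<in>UNIV. Sw x y * f x y) = (\<Sum>i\<in>UNIV. \<Sum>j\<in>UNIV. \<Sum>k\<in>UNIV. \<Sum>l\<in>UNIV.
      (if l = i then (if k = j then f (i,j) (k,l) else 0) else 0))"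
    unfolding sum_pair by (intro sum.cong refl) (auto simp: Sw_def)
  also have "\<dots> = (\<Sum>i\<in>UNIV. \<Sum>j\<in>UNIV. f (i,j) (j,i))" by simp
  finally show ?thesis .
qed

lemma frob_sum:
  assumes U: "unitary_mat (U::complex^'n::finite^'n)"
  defines "T \<equiv> \<lambda>x y. U $ snd x $ fst y * cnj (U $ snd y $ fst x)"
  shows "(\<Sum>x\<in>UNIV. \<Sum>y\<in>UNIV. (cmod (Sw x y - T x y))^2)
     = 2 * (real CARD('n))^2 - 2 * (cmod (trace U))^2"
proof -
  have cs: "cnj (Sw x y) = Sw x y" for x y by (simp add: Sw_def)
  have ss: "Sw x y * Sw x y = Sw x y" for x y by (simp add: Sw_def)
  have e: "(Sw x y - T x y) * cnj (Sw x y - T x y) = Sw x y - Sw x y * cnj (T x y) - Sw x y * T x y + T x y * cnj (T x y)" for x y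
    by (simp add: cs algebra_simps ss)
  have i: "(\<Sum>x\<in>UNIV. \<Sum>y\<in>UNIV. Sw (x::'n\<times>'n) y) = of_nat (CARD('n) * CARD('n))"
    using sum_Sw[where 'n='n, of "\<lambda>x y. 1"] by simp
  have ii: "(\<Sum>x\<in>UNIV. \<Sum>y\<in>UNIV. Sw x y * cnj (T x y)) = cnj (trace U) * trace U"
    using sum_Sw[of "\<lambda>x y. cnj (T x y)"] by (simp add: T_def trace_def sum_product mult.commute)
  have iii: "(\<Sum>x\<in>UNIV. \<Sum>y\<in>UNIV. Sw x y * T x y) = cnj (trace U) * trace U"
  proof -
    have "(\<Sum>x\<in>UNIV. \<Sum>y\<in>UNIV. Sw x y * T x y) = (\<Sum>i\<in>UNIV. \<Sum>j\<in>UNIV. U $ j $ j * cnj (U $ i $ i))"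
      using sum_Sw[of "\<lambda>x y. T x y"] by (simp add: T_def)
    also have "\<dots> = (\<Sum>j\<in>UNIV. \<Sum>i\<in>UNIV. U $ j $ j * cnj (U $ i $ i))" by (rule sum.swap)
    also have "\<dots> = cnj (trace U) * trace U" by (simp add: trace_def sum_product mult.commute)
    finally show ?thesis .
  qed
  have iv: "(\<Sum>x\<in>UNIV. \<Sum>y\<in>UNIV. T x y * cnj (T x y)) = of_nat (CARD('n) * CARD('n))"
  proof -
    have "(\<Sum>x\<in>UNIV. \<Sum>y\<in>UNIV. T x y * cnj (T x y)) = (\<Sum>x1\<in>UNIV. \<Sum>x2\<in>UNIV. \<Sum>y1\<in>UNIV. 
          (U $ x2 $ y1 * cnj (U $ x2 $ y1)) * (\<Sum>y2\<in>UNIV. cnj (U $ y2 $ x1) * U $ y2 $ x1))"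
      by (simp add: sum_pair T_def sum_distrib_left mult_ac)
    also have "\<dots> = (\<Sum>x1::'n\<in>UNIV. \<Sum>x2\<in>UNIV. (\<Sum>y1\<in>UNIV. U $ x2 $ y1 * cnj (U $ x2 $ y1)))"
      by (simp add: unit_cols[OF U])
    also have "\<dots> = of_nat (CARD('n) * CARD('n))"
      by (simp add: unit_rows[OF U])
    finally show ?thesis .
  qed
  have "complex_of_real (\<Sum>x\<in>UNIV. \<Sum>y\<in>UNIV. (cmod (Sw x y - T x y))^2)
     = (\<Sum>x\<in>UNIV. \<Sum>y\<in>UNIV. (Sw x y - T x y) * cnj (Sw x y - T x y))"
    by (simp only: of_real_sum complex_norm_square)
  also have "\<dots> = (\<Sum>x\<in>UNIV. \<Sum>y\<in>UNIV. Sw (x::'n\<times>'n) y) - (\<Sum>x\<in>UNIV. \<Sum>y\<in>UNIV. Sw x y * cnj (T x y))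
      - (\<Sum>x\<in>UNIV. \<Sum>y\<in>UNIV. Sw x y * T x y) + (\<Sum>x\<in>UNIV. \<Sum>y\<in>UNIV. T x y * cnj (T x y))"
    by (simp only: e sum.distrib sum_subtractf)
  also have "\<dots> = complex_of_real (2 * (real CARD('n))^2 - 2 * (cmod (trace U))^2)"
    unfolding i ii iii iv
    by (simp add: complex_norm_square[symmetric] mult.commute power2_eq_square)
  finally show ?thesis by (simp only: of_real_eq_iff)
qed



lemma fu_W:
  fixes W :: "complex^('n::finite \<times> 'n)^('n \<times> 'n)"
  assumes W: "\<And>x y. W $ x $ y = a * (if x = y then 1 else 0) + b * Sw x y"
  and U: "unitary_mat U"
  shows "fu_dist W U = cmod b * sqrt ((real CARD('n))^2 - (cmod (trace U))^2)"
proof -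
  define T where "T \<equiv> \<lambda>x y. U $ snd x $ fst y * cnj (U $ snd y $ fst x)"
  have d: "(W - rho_f W U) $ x $ y = b * (Sw x y - T x y)" for x y
    by (simp add: W rhof_entry[OF W U] T_def algebra_simps)
  have "(\<Sum>x\<in>UNIV. \<Sum>y\<in>UNIV. (cmod ((W - rho_f W U) $ x $ y))^2)
      = (\<Sum>x\<in>UNIV. \<Sum>y\<in>UNIV. (cmod b)^2 * (cmod (Sw x y - T x y))^2)"
    by (simp only: d norm_mult power_mult_distrib)
  also have "\<dots> = (cmod b)^2 * (2 * ((real CARD('n))^2 - (cmod (trace U))^2))"
    using frob_sum[OF U] by (simp add: sum_distrib_left[symmetric] T_def)
  finally have "frob_norm (W - rho_f W U) = sqrt ((cmod b)^2 * (2 * ((real CARD('n))^2 - (cmod (trace U))^2)))"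
    by (simp add: frob_norm_def)
  also have "\<dots> = cmod b * sqrt 2 * sqrt ((real CARD('n))^2 - (cmod (trace U))^2)"
    by (simp only: real_sqrt_mult real_sqrt_abs abs_norm_cancel mult.assoc)
  finally show ?thesis by (simp add: fu_dist_def)
qed

lemma fu_W_le:
  assumes "unitary_mat (U::complex^'n::finite^'n)"
  shows "cmod b * sqrt ((real CARD('n))^2 - (cmod (trace U))^2) \<le> cmod b * real CARD('n)"
proof -
  have "sqrt ((real CARD('n))^2 - (cmod (trace U))^2) \<le> sqrt ((real CARD('n))^2)"
    by (intro real_sqrt_le_mono) simp
  thus ?thesis by (simp add: mult_left_mono)
qed

lemma traceless_unitary_exists:
  assumes "CARD('n::finite) \<ge> 2"
  shows "\<exists>U::complex^'n^'n. unitary_mat U \<and> trace U = 0"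
proof -
  let ?D = "CARD('n)"
  obtain h where h: "bij_betw h (UNIV::'n set) {0..<?D}"
    using ex_bij_betw_finite_nat[of "UNIV::'n set"] by auto
  define U :: "complex^'n^'n" where "U = (\<chi> i j. if i = j then cis (2 * pi * real (h i) / real ?D) else 0)"
  define c where "c = (\<lambda>i. cis (2 * pi * real (h i) / real ?D))"
  have Ue: "U $ i $ j = (if i = j then c i else 0)" for i j by (simp add: U_def c_def)
  have cc: "cnj (c i) * c i = 1" "c i * cnj (c i) = 1" for i by (simp_all add: c_def cis_cnj cis_mult)
  have "(\<Sum>k\<in>UNIV. cnj (U$k$i) * U$k$j) = (if i = j then 1 else 0)" for i j
  proof -
    have "(\<Sum>k\<in>UNIV. cnj (U$k$i) * U$k$j) = (\<Sum>k\<in>UNIV. if k = i then (if i = j then 1 else 0) else 0)"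
      by (intro sum.cong refl) (auto simp: Ue cc)
    thus ?thesis by simp
  qed
  moreover have "(\<Sum>k\<in>UNIV. U$i$k * cnj (U$j$k)) = (if i = j then 1 else 0)" for i j
  proof -
    have "(\<Sum>k\<in>UNIV. U$i$k * cnj (U$j$k)) = (\<Sum>k\<in>UNIV. if k = i then (if i = j then 1 else 0) else 0)"
      by (intro sum.cong refl) (auto simp: Ue cc)
    thus ?thesis by simp
  qed
  ultimately have "adj U ** U = mat 1" "U ** adj U = mat 1"
    by (simp_all add: vec_eq_iff mm_entry adj_def mat_def)
  hence u: "unitary_mat U" by (simp add: unitary_mat_def)
  have "trace U = (\<Sum>i\<in>UNIV. cis (2 * pi * real (h i) / real ?D))"
    by (simp add: trace_def U_def)
  also have "\<dots> = (\<Sum>k\<in>{0..<?D}. cis (2 * pi * real k / real ?D))"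
    by (rule sum.reindex_bij_betw[OF h])
  also have "\<dots> = (\<Sum>z | z ^ ?D = 1. z :: complex)"
  proof -
    have "?D > 0" using assms by simp
    from Complex.bij_betw_roots_unity[OF this] show ?thesis
      by (intro sum.reindex_bij_betw) (simp only: atLeast0LessThan)
  qed
  also have "\<dots> = 0" using sum_roots_unity[of ?D] assms by simp
  finally show ?thesis using u by blast
qed



theorem theorem2:
  fixes e :: "'n::finite \<Rightarrow> complex^'n" and p :: real
  assumes "CARD('n) \<ge> 2"
    and "orthonormal_basis e"
    and "0 \<le> p" and "p \<le> 1"
  shows "d_max (werner e p) =
           \<bar>2 * p * real CARD('n) - real CARD('n) - 1\<bar> / ((real CARD('n))^2 - 1)
         \<and> (\<forall>U :: complex^'n^'n. unitary_mat U \<and> trace U = 0 \<longrightarrow>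
              cyclic (werner e p) U \<and>
              fu_dist (werner e p) U =
                \<bar>2 * p * real CARD('n) - real CARD('n) - 1\<bar> / ((real CARD('n))^2 - 1))"
proof -
  define D where "D = real CARD('n)"
  define c1 where "c1 = p * 2 / (D^2 + D)"
  define c2 where "c2 = (1 - p) * 2 / (D^2 - D)"
  define v where "v = \<bar>2 * p * real CARD('n) - real CARD('n) - 1\<bar> / ((real CARD('n))^2 - 1)"
  let ?a = "complex_of_real ((c1 + c2)/2)"
  let ?b = "complex_of_real ((c1 - c2)/2)"
  let ?W = "werner e p"
  have W: "\<And>x y. ?W $ x $ y = ?a * (if x = y then 1 else 0) + ?b * Sw x y"
    using werner_entry[OF assms(2), of p] unfolding c1_def c2_def D_def by simp
  have D2: "D \<ge> 2" using assms(1) by (simp add: D_def)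
  have "(c1 - c2)/2 * D = (2 * p * D - D - 1) / (D^2 - 1)"
  proof -
    have h1: "D^2 + D \<noteq> 0" "D^2 - D \<noteq> 0" "D^2 - 1 \<noteq> 0" "D + 1 \<noteq> 0" "D - 1 \<noteq> 0" "D \<noteq> 0"
    proof -
      have "D * D \<ge> 2 * 2" using D2 by (intro mult_mono) auto
      thus "D^2 + D \<noteq> 0" "D^2 - D \<noteq> 0" "D^2 - 1 \<noteq> 0" "D + 1 \<noteq> 0" "D - 1 \<noteq> 0" "D \<noteq> 0"
        using D2 by (simp_all add: power2_eq_square)
    qed
    have "D^2 + D = D * (D + 1)" "D^2 - D = D * (D - 1)" "D^2 - 1 = (D+1)*(D-1)"
      by (simp_all add: power2_eq_square algebra_simps)
    thus ?thesis using h1 unfolding c1_def c2_def by (simp add: field_simps)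
  qed
  hence bv: "cmod ?b * D = v"
  proof -
    assume h: "(c1 - c2)/2 * D = (2 * p * D - D - 1) / (D^2 - 1)"
    have "D * D \<ge> 2 * 2" using D2 by (intro mult_mono) auto
    hence pos: "D^2 - 1 > 0" by (simp add: power2_eq_square)
    have "cmod ?b * D = \<bar>(c1 - c2)/2\<bar> * \<bar>D\<bar>" using D2 by (simp only: norm_of_real)
    also have "\<dots> = \<bar>(c1 - c2)/2 * D\<bar>" by (simp only: abs_mult)
    also have "\<dots> = \<bar>2 * p * D - D - 1\<bar> / (D^2 - 1)" using pos by (simp only: h abs_div) simp
    finally show ?thesis unfolding v_def D_def .
  qed
  have fu_max: "fu_dist ?W U = v" if "unitary_mat U" "trace U = 0" for U
    using fu_W[OF W that(1)] that(2) bv D2 by (simp add: D_def)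
  have part2: "\<forall>U :: complex^'n^'n. unitary_mat U \<and> trace U = 0 \<longrightarrow> cyclic ?W U \<and> fu_dist ?W U = v"
    using cyclic_W[OF W] fu_max by blast
  obtain U0 :: "complex^'n^'n" where U0: "unitary_mat U0" "trace U0 = 0"
    using traceless_unitary_exists[OF assms(1)] by blast
  have "d_max ?W = v"
    unfolding d_max_def
  proof (rule cSup_eq_maximum)
    show "v \<in> {fu_dist ?W U | U. cyclic ?W U}" using part2 U0 by blast
    fix x assume "x \<in> {fu_dist ?W U | U. cyclic ?W U}"
    then obtain U where "cyclic ?W U" "x = fu_dist ?W U" by blast
    hence "unitary_mat U" "x = fu_dist ?W U" by (auto simp: cyclic_def)
    hence "x = cmod ?b * sqrt ((real CARD('n))^2 - (cmod (trace U))^2)" using fu_W[OF W] by simp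
    also have "\<dots> \<le> cmod ?b * real CARD('n)" by (rule fu_W_le) fact
    also have "\<dots> = v" using bv by (simp only: D_def)
    finally show "x \<le> v" .
  qed
  thus ?thesis using part2 unfolding v_def by blast
qed

end
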